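(* Let $n$ and $M\ge 2$ be positive integers with $M$ dividing $n$, let $N=n/M$, and let $\lambda>0$. Let $\{X_{c,i,k}: 1\le c\le N,\ 1\le i\le M,\ 1\le k\le M-1\}$ be i.i.d. exponential random variables with rate $\lambda$, and define $$U_{c,i}=\max_{1\le k\le M-1} X_{c,i,k},\qquad V_c=\sum_{i=1}^{M}U_{c,i},\qquad Y_I=\max_{1\le c\le N} V_c .$$ Let $\bar U_1,\dots,\bar U_M$ be i.i.d. random variables, each distributed as the maximum $X_{n:n}$ of $n$ i.i.d. exponential random variables with rate $\lambda$, and set $\bar V=\sum_{i=1}^M \bar U_i$. Then $Y_I\le \bar V$ in the usual stochastic order, i.e. $\Pr(Y_I>t)\le \Pr(\bar V>t)$ for every real $t$.
   Context: Model: $n$ nodes in a fixed square area are divided into $N=n/M$ cells of $M$ nodes each. In Phase I of the transmission scheme, cells operate in parallel; within each cell, each of the $M$ nodes in turn transmits its update packet to the other $M-1$ nodes of its cell, the intra-cell transmission delays being i.i.d. exponential with rate $\lambda$, and a node's transmission is complete when all $M-1$ recipients have received it. Thus $U_{c,i}$ is the time for node $i$ of cell $c$ to distribute its packet, $V_c$ is the time for cell $c$ to finish Phase I, and $Y_I$ (the duration of Phase I) is the time until the slowest cell finishes. For random variables $X_1,\dots,X_n$, $X_{k:n}$ denotes the $k$-th smallest. *)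

theory Defs
  imports "HOL-Probability.Probability"
begin

definition max_exp_law :: "nat \<Rightarrow> real \<Rightarrow> real measure" where
  "max_exp_law n lam =
     distr (PiM {..<n} (\<lambda>_. density lborel (exponential_density lam))) borel
           (\<lambda>x. Max (x ` {..<n}))"

end

theory Submission
  imports Defs
begin
lemma distr_indep_PiM:
  fixes X :: "'i \<Rightarrow> 'a \<Rightarrow> real"
  assumes "prob_space P" "I \<noteq> {}"
    and ind: "prob_space.indep_vars P (\<lambda>_. borel) X I"
    and d: "\<And>j. j \<in> I \<Longrightarrow> distr P borel (X j) = E"
  shows "distr P (PiM I (\<lambda>_. borel)) (\<lambda>\<omega>. \<lambda>j\<in>I. X j \<omega>) = PiM I (\<lambda>_. E)"
proof -
  interpret prob_space P by fact
  have rv: "\<And>i. i \<in> I \<Longrightarrow> random_variable borel (X i)"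
    using ind by (auto simp: indep_vars_def)
  have "distr P (PiM I (\<lambda>_. borel)) (\<lambda>\<omega>. \<lambda>j\<in>I. X j \<omega>) = PiM I (\<lambda>j. distr P borel (X j))"
    using indep_vars_iff_distr_eq_PiM'[where I=I and M'="\<lambda>_. borel" and X=X] assms rv by auto
  also have "\<dots> = PiM I (\<lambda>_. E)"
    by (rule PiM_cong) (auto simp: d)
  finally show ?thesis .
qed

lemma coords_indep:
  assumes "prob_space E" and False: "I \<noteq> {}"
  shows "prob_space.indep_vars (PiM I (\<lambda>_. E)) (\<lambda>_. E) (\<lambda>j y. y j) I"
proof -
  interpret p: prob_space "PiM I (\<lambda>_. E)" using assms by (intro prob_space_PiM) auto
  have "distr (PiM I (\<lambda>_. E)) (PiM I (\<lambda>_. E)) (\<lambda>y. \<lambda>j\<in>I. y j) = PiM I (\<lambda>_. E)"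
    using distr_PiM_reindex[of I "\<lambda>_. E" id I] assms by simp
  also have "\<dots> = PiM I (\<lambda>j. distr (PiM I (\<lambda>_. E)) E (\<lambda>y. y j))"
    by (rule PiM_cong) (auto intro!: sym[OF distr_PiM_component] assms)
  finally show ?thesis
    using p.indep_vars_iff_distr_eq_PiM'[where I=I and M'="\<lambda>_. E" and X="\<lambda>j y. y j"] False by auto
qed

lemma block_max:
  fixes E :: "real measure" and K :: "'i set" and J :: "'j set"
  assumes E: "prob_space E" "sets E = sets borel"
    and K: "finite K" "K \<noteq> {}" and J: "finite J" "J \<noteq> {}"
  shows "distr (PiM (K \<times> J) (\<lambda>_. E)) (PiM K (\<lambda>_. borel))
           (\<lambda>y. \<lambda>i\<in>K. Max ((\<lambda>j. y (i, j)) ` J))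
         = PiM K (\<lambda>_. distr (PiM J (\<lambda>_. E)) borel (\<lambda>x. Max (x ` J)))"
proof -
  let ?O = "PiM (K \<times> J) (\<lambda>_. E)"
  interpret p: prob_space ?O using E by (intro prob_space_PiM) auto
  have ci: "p.indep_vars (\<lambda>_. E) (\<lambda>j y. y j) (K \<times> J)"
    using coords_indep[OF E(1), of "K \<times> J"] K J by auto
  have r: "p.indep_vars (\<lambda>i. PiM ({i} \<times> J) (\<lambda>_. E)) (\<lambda>i \<omega>. restrict (\<lambda>j. \<omega> j) ({i} \<times> J)) K"
    by (rule p.indep_vars_restrict[OF ci]) (auto simp: disjoint_family_on_def)
  have hm: "(\<lambda>z. Max ((\<lambda>j. z (i, j)) ` J)) \<in> borel_measurable (PiM ({i} \<times> J) (\<lambda>_. E))" for i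
    using J E(2) by measurable
  have r2: "p.indep_vars (\<lambda>_. borel) (\<lambda>i \<omega>. (\<lambda>z. Max ((\<lambda>j. z (i, j)) ` J)) (restrict (\<lambda>j. \<omega> j) ({i} \<times> J))) K"
    by (rule p.indep_vars_compose2[OF r hm])
  have r3: "p.indep_vars (\<lambda>_. borel) (\<lambda>i \<omega>. Max ((\<lambda>j. \<omega> (i, j)) ` J)) K"
    using r2 by (rule p.indep_vars_cong[THEN iffD1, rotated -1]) (auto intro!: arg_cong[where f=Max] image_cong)
  have rv: "p.random_variable borel (\<lambda>\<omega>. Max ((\<lambda>j. \<omega> (i, j)) ` J))" if "i \<in> K" for i
    using r3 that by (auto simp: p.indep_vars_def)
  have "distr ?O (PiM K (\<lambda>_. borel)) (\<lambda>y. \<lambda>i\<in>K. Max ((\<lambda>j. y (i, j)) ` J))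
     = PiM K (\<lambda>i. distr ?O borel (\<lambda>\<omega>. Max ((\<lambda>j. \<omega> (i, j)) ` J)))"
    apply (subst p.indep_vars_iff_distr_eq_PiM'[where I=K and M'="\<lambda>_. borel" and X="\<lambda>i \<omega>. Max ((\<lambda>j. \<omega> (i, j)) ` J)", symmetric])
    using r3 K(2) rv by blast+
  also have "\<dots> = PiM K (\<lambda>_. distr (PiM J (\<lambda>_. E)) borel (\<lambda>x. Max (x ` J)))"
  proof (rule PiM_cong)
    fix i assume i: "i \<in> K"
    have re: "distr ?O (PiM J (\<lambda>_. E)) (\<lambda>\<omega>. \<lambda>j\<in>J. \<omega> (i, j)) = PiM J (\<lambda>_. E)"
      using distr_PiM_reindex[of "K \<times> J" "\<lambda>_. E" "\<lambda>j. (i, j)" J] E i by (auto simp: inj_on_def)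
    have "distr (PiM J (\<lambda>_. E)) borel (\<lambda>x. Max (x ` J))
        = distr (distr ?O (PiM J (\<lambda>_. E)) (\<lambda>\<omega>. \<lambda>j\<in>J. \<omega> (i, j))) borel (\<lambda>x. Max (x ` J))"
      by (simp add: re)
    also have "\<dots> = distr ?O borel ((\<lambda>x. Max (x ` J)) \<circ> (\<lambda>\<omega>. \<lambda>j\<in>J. \<omega> (i, j)))"
      proof (rule distr_distr)
      show "(\<lambda>\<omega>. \<lambda>j\<in>J. \<omega> (i, j)) \<in> measurable ?O (PiM J (\<lambda>_. E))"
        by (rule measurable_restrict) (use i in \<open>auto intro!: measurable_component_singleton\<close>)
      have "(\<lambda>x. Max ((\<lambda>j. x j) ` J)) \<in> borel_measurable (PiM J (\<lambda>_. E))"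
      proof (rule borel_measurable_Max[OF J(1)])
        fix j assume "j \<in> J"
        then have "(\<lambda>x. x j) \<in> measurable (PiM J (\<lambda>_. E)) E"
          by (intro measurable_component_singleton)
        then show "(\<lambda>x. x j) \<in> borel_measurable (PiM J (\<lambda>_. E))"
          using measurable_cong_sets[OF refl E(2)] by blast
      qed
      then show "(\<lambda>x. Max (x ` J)) \<in> borel_measurable (PiM J (\<lambda>_. E))" by simp
    qed
    also have "\<dots> = distr ?O borel (\<lambda>\<omega>. Max ((\<lambda>j. \<omega> (i, j)) ` J))"
      by (rule distr_cong) (auto intro!: arg_cong[where f=Max] image_cong)
    finally show "distr ?O borel (\<lambda>\<omega>. Max ((\<lambda>j. \<omega> (i, j)) ` J)) = distr (PiM J (\<lambda>_. E)) borel (\<lambda>x. Max (x ` J))" by simp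
  qed auto
  finally show ?thesis .
qed

theorem lemma1:
  fixes P :: "'a measure" and Q :: "'b measure"
    and n M :: nat and lam :: real
    and X :: "nat \<times> nat \<times> nat \<Rightarrow> 'a \<Rightarrow> real"
    and Ub :: "nat \<Rightarrow> 'b \<Rightarrow> real"
  assumes "0 < n" and "2 \<le> M" and "M dvd n" and "0 < lam"
    and "prob_space P" and "prob_space Q"
    and "prob_space.indep_vars P (\<lambda>_. borel) X ({..<n div M} \<times> {..<M} \<times> {..<M - 1})"
    and "\<And>j. j \<in> {..<n div M} \<times> {..<M} \<times> {..<M - 1} \<Longrightarrow>
            distributed P lborel (X j) (exponential_density lam)"
    and "prob_space.indep_vars Q (\<lambda>_. borel) Ub {..<M}"
    and "\<And>i. i < M \<Longrightarrow> distr Q borel (Ub i) = max_exp_law n lam"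
  shows "measure P {\<omega> \<in> space P.
            (MAX c\<in>{..<n div M}. \<Sum>i<M. MAX k\<in>{..<M - 1}. X (c, i, k) \<omega>) > t}
         \<le> measure Q {\<omega> \<in> space Q. (\<Sum>i<M. Ub i \<omega>) > t}"
proof -
  define N where "N = n div M"
  define E where "E = density lborel (exponential_density lam)"
  define I1 where "I1 = {..<n div M} \<times> {..<M} \<times> {..<M - 1}"
  define I2 where "I2 = {..<M} \<times> {..<n}"
  define \<Omega> where "\<Omega> = PiM I2 (\<lambda>_. E)"
  have EP: "prob_space E" unfolding E_def by (rule prob_space_exponential_density) fact
  have Es: "sets E = sets borel" unfolding E_def by simp
  interpret pO: prob_space \<Omega> unfolding \<Omega>_def using EP by (intro prob_space_PiM) auto
  have nNM: "n = N * M" unfolding N_def using assms(3) by simp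
  have N0: "0 < N" using nNM assms(1) by (cases N) auto
  have M1: "0 < M - 1" using assms(2) by simp
  have "(0, 0, 0) \<in> I1" unfolding I1_def N_def[symmetric] using N0 M1 assms(2) by auto
  then have I1ne: "I1 \<noteq> {}" "finite I1" by (blast, simp add: I1_def)
  have bound: "c * (M - 1) + k < n" if "c < N" "k < M - 1" for c k
  proof -
    have "c * (M - 1) + k < c * (M - 1) + (M - 1)" using that by simp
    also have "\<dots> = Suc c * (M - 1)" by simp
    also have "\<dots> \<le> N * (M - 1)" using that by (intro mult_le_mono1) simp
    also have "\<dots> \<le> N * M" by simp
    finally show ?thesis using nNM by simp
  qed
  define e where "e = (\<lambda>(c::nat, i::nat, k::nat). (i, c * (M - 1) + k))"
  have e_inj: "inj_on e I1"
  proof (rule inj_onI)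
    fix a b assume a: "a \<in> I1" and b: "b \<in> I1" and eq: "e a = e b"
    obtain c i k where a': "a = (c, i, k)" by (cases a) auto
    obtain c' i' k' where b': "b = (c', i', k')" by (cases b) auto
    have k: "k < M - 1" "k' < M - 1" using a b a' b' I1_def by auto
    have i: "i = i'" and s: "c * (M - 1) + k = c' * (M - 1) + k'" using eq a' b' e_def by auto
    have "(c * (M - 1) + k) div (M - 1) = c" "(c * (M - 1) + k) mod (M - 1) = k"
      using k M1 by auto
    moreover have "(c' * (M - 1) + k') div (M - 1) = c'" "(c' * (M - 1) + k') mod (M - 1) = k'"
      using k M1 by auto
    ultimately show "a = b" using s i a' b' by metis
  qed
  have e_into: "e \<in> I1 \<rightarrow> I2" using bound unfolding I1_def I2_def e_def N_def by auto
  have dX: "distr P borel (X j) = E" if "j \<in> I1" for j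
  proof -
    have "distr P lborel (X j) = E" using assms(8)[of j] that unfolding I1_def E_def distributed_def by auto
    moreover have "distr P borel (X j) = distr P lborel (X j)" by (rule distr_cong) auto
    ultimately show ?thesis by simp
  qed
  have LP: "distr P (PiM I1 (\<lambda>_. borel)) (\<lambda>\<omega>. \<lambda>j\<in>I1. X j \<omega>) = PiM I1 (\<lambda>_. E)"
    by (rule distr_indep_PiM[OF assms(5) I1ne(1)]) (use assms(7) dX in \<open>auto simp: I1_def\<close>)
  define F where "F = (\<lambda>x::nat \<times> nat \<times> nat \<Rightarrow> real. MAX c\<in>{..<n div M}. \<Sum>i<M. MAX k\<in>{..<M - 1}. x (c, i, k))"
  have comp: "(\<lambda>x. x j) \<in> borel_measurable (PiM I (\<lambda>_. B))" if "j \<in> I" "sets B = sets (borel::real measure)" for j and I :: "'z set" and B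
  proof -
    have "(\<lambda>x. x j) \<in> measurable (PiM I (\<lambda>_. B)) B" using that by (intro measurable_component_singleton)
    then show ?thesis using measurable_cong_sets[OF refl that(2)] by blast
  qed
  have Fm: "F \<in> borel_measurable (PiM I1 (\<lambda>_. B))" if "sets B = sets (borel::real measure)" for B
    unfolding F_def
    by (intro borel_measurable_Max borel_measurable_sum comp that) (auto simp: I1_def)
  define S where "S = {x \<in> space (PiM I1 (\<lambda>_. borel)). F x > t}"
  have S1: "S \<in> sets (PiM I1 (\<lambda>_. borel))" unfolding S_def using Fm[of borel] by measurable
  have sPE: "sets (PiM I (\<lambda>_. E)) = sets (PiM I (\<lambda>_. borel))" for I :: "'z set"
    by (rule sets_PiM_cong) (auto simp: Es)
  have S2: "S \<in> sets (PiM I1 (\<lambda>_. E))" using S1 by (simp only: sPE)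
  have Xvm: "(\<lambda>\<omega>. \<lambda>j\<in>I1. X j \<omega>) \<in> measurable P (PiM I1 (\<lambda>_. borel))"
    using assms(7) unfolding I1_def prob_space.indep_vars_def[OF assms(5)]
    by (intro measurable_restrict) auto
  have "measure P {\<omega> \<in> space P.
            (MAX c\<in>{..<n div M}. \<Sum>i<M. MAX k\<in>{..<M - 1}. X (c, i, k) \<omega>) > t}
      = measure P ((\<lambda>\<omega>. \<lambda>j\<in>I1. X j \<omega>) -` S \<inter> space P)"
    unfolding S_def F_def I1_def
    by (intro arg_cong[where f="measure P"]) (auto simp: space_PiM PiE_iff intro!: arg_cong[where f=Max] image_cong sum.cong)
  also have "\<dots> = measure (PiM I1 (\<lambda>_. E)) S"
    using measure_distr[OF Xvm S1] LP by simp
  also have "\<dots> = measure \<Omega> ((\<lambda>y. \<lambda>j\<in>I1. y (e j)) -` S \<inter> space \<Omega>)"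
  proof -
    have "distr \<Omega> (PiM I1 (\<lambda>_. E)) (\<lambda>y. \<lambda>j\<in>I1. y (e j)) = PiM I1 (\<lambda>_. E)"
      unfolding \<Omega>_def using distr_PiM_reindex[of I2 "\<lambda>_. E" e I1] EP e_inj e_into by auto
    moreover have "(\<lambda>y. \<lambda>j\<in>I1. y (e j)) \<in> measurable \<Omega> (PiM I1 (\<lambda>_. E))"
      unfolding \<Omega>_def using e_into by (intro measurable_restrict measurable_component_singleton) auto
    ultimately show ?thesis using measure_distr[OF _ S2] by metis
  qed
  finally have Pside: "measure P {\<omega> \<in> space P.
            (MAX c\<in>{..<n div M}. \<Sum>i<M. MAX k\<in>{..<M - 1}. X (c, i, k) \<omega>) > t}
     = measure \<Omega> ((\<lambda>y. \<lambda>j\<in>I1. y (e j)) -` S \<inter> space \<Omega>)" .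
  define Zv where "Zv = (\<lambda>y::nat \<times> nat \<Rightarrow> real. \<lambda>i\<in>{..<M}. Max ((\<lambda>j. y (i, j)) ` {..<n}))"
  define G where "G = (\<lambda>u::nat \<Rightarrow> real. \<Sum>i<M. u i)"
  define T where "T = {u \<in> space (PiM {..<M} (\<lambda>_. borel)). G u > t}"
  have T1: "T \<in> sets (PiM {..<M} (\<lambda>_. borel))"
  proof -
    have "G \<in> borel_measurable (PiM {..<M} (\<lambda>_. borel))"
      unfolding G_def by (intro borel_measurable_sum comp) auto
    then show ?thesis unfolding T_def by measurable
  qed
  have "0 \<in> {..<M}" using assms(2) by simp
  then have M0: "{..<M} \<noteq> {}" by blast
  have Uvm: "(\<lambda>\<omega>. \<lambda>i\<in>{..<M}. Ub i \<omega>) \<in> measurable Q (PiM {..<M} (\<lambda>_. borel))"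
    using assms(9) unfolding prob_space.indep_vars_def[OF assms(6)]
    by (intro measurable_restrict) auto
  have LQ: "distr Q (PiM {..<M} (\<lambda>_. borel)) (\<lambda>\<omega>. \<lambda>i\<in>{..<M}. Ub i \<omega>) = PiM {..<M} (\<lambda>_. max_exp_law n lam)"
    by (rule distr_indep_PiM[OF assms(6) M0 assms(9)]) (use assms(10) in auto)
  have BQ: "distr \<Omega> (PiM {..<M} (\<lambda>_. borel)) Zv = PiM {..<M} (\<lambda>_. max_exp_law n lam)"
    unfolding \<Omega>_def Zv_def I2_def max_exp_law_def E_def[symmetric]
    by (rule block_max) (use EP Es M0 assms(1) in auto)
  have Zvm: "Zv \<in> measurable \<Omega> (PiM {..<M} (\<lambda>_. borel))"
    unfolding Zv_def \<Omega>_def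
    by (intro measurable_restrict borel_measurable_Max comp) (auto simp: I2_def Es)
  have "measure Q {\<omega> \<in> space Q. (\<Sum>i<M. Ub i \<omega>) > t}
      = measure Q ((\<lambda>\<omega>. \<lambda>i\<in>{..<M}. Ub i \<omega>) -` T \<inter> space Q)"
    unfolding T_def G_def
    by (intro arg_cong[where f="measure Q"]) (auto simp: space_PiM PiE_iff)
  also have "\<dots> = measure (PiM {..<M} (\<lambda>_. max_exp_law n lam)) T"
    using measure_distr[OF Uvm T1] LQ by simp
  also have "\<dots> = measure \<Omega> (Zv -` T \<inter> space \<Omega>)"
    using measure_distr[OF Zvm T1] BQ by simp
  finally have Qside: "measure Q {\<omega> \<in> space Q. (\<Sum>i<M. Ub i \<omega>) > t} = measure \<Omega> (Zv -` T \<inter> space \<Omega>)" .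
  have ineq: "F (\<lambda>j\<in>I1. y (e j)) \<le> G (Zv y)" for y
  proof -
    have "F (\<lambda>j\<in>I1. y (e j)) = (MAX c\<in>{..<N}. \<Sum>i<M. MAX k\<in>{..<M - 1}. y (i, c * (M - 1) + k))"
      unfolding F_def N_def I1_def e_def
      by (auto intro!: arg_cong[where f=Max] image_cong sum.cong)
    also have "\<dots> \<le> (\<Sum>i<M. Max ((\<lambda>j. y (i, j)) ` {..<n}))"
    proof (subst Max_le_iff)
      show "finite ((\<lambda>c. \<Sum>i<M. MAX k\<in>{..<M - 1}. y (i, c * (M - 1) + k)) ` {..<N})" by simp
      show "(\<lambda>c. \<Sum>i<M. MAX k\<in>{..<M - 1}. y (i, c * (M - 1) + k)) ` {..<N} \<noteq> {}" using N0 by auto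
      show "\<forall>a\<in>(\<lambda>c. \<Sum>i<M. MAX k\<in>{..<M - 1}. y (i, c * (M - 1) + k)) ` {..<N}. a \<le> (\<Sum>i<M. Max ((\<lambda>j. y (i, j)) ` {..<n}))"
      proof (rule ballI)
        fix a assume "a \<in> (\<lambda>c. \<Sum>i<M. MAX k\<in>{..<M - 1}. y (i, c * (M - 1) + k)) ` {..<N}"
        then obtain c where c: "c \<in> {..<N}" and a: "a = (\<Sum>i<M. MAX k\<in>{..<M - 1}. y (i, c * (M - 1) + k))" by blast
        show "a \<le> (\<Sum>i<M. Max ((\<lambda>j. y (i, j)) ` {..<n}))"
          unfolding a
        proof (rule sum_mono)
          fix i
          show "(MAX k\<in>{..<M - 1}. y (i, c * (M - 1) + k)) \<le> Max ((\<lambda>j. y (i, j)) ` {..<n})"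
          proof (subst Max_le_iff)
            show "finite ((\<lambda>k. y (i, c * (M - 1) + k)) ` {..<M - 1})" by simp
            show "(\<lambda>k. y (i, c * (M - 1) + k)) ` {..<M - 1} \<noteq> {}"
            proof -
              have "0 \<in> {..<M - 1}" using M1 by simp
              then show ?thesis by blast
            qed
            show "\<forall>a\<in>(\<lambda>k. y (i, c * (M - 1) + k)) ` {..<M - 1}. a \<le> Max ((\<lambda>j. y (i, j)) ` {..<n})"
              using bound c by (auto intro!: Max_ge)
          qed
        qed
      qed
    qed
    finally show ?thesis unfolding G_def Zv_def by simp
  qed
  have sub: "(\<lambda>y. \<lambda>j\<in>I1. y (e j)) -` S \<inter> space \<Omega> \<subseteq> Zv -` T \<inter> space \<Omega>"
  proof (rule subsetI)
    fix y assume y: "y \<in> (\<lambda>y. \<lambda>j\<in>I1. y (e j)) -` S \<inter> space \<Omega>"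
    then have "t < F (\<lambda>j\<in>I1. y (e j))" unfolding S_def by auto
    then have "t < G (Zv y)" using ineq[of y] by linarith
    then have "Zv y \<in> T" unfolding T_def by (auto simp: space_PiM Zv_def)
    then show "y \<in> Zv -` T \<inter> space \<Omega>" using y by blast
  qed
  have "Zv -` T \<inter> space \<Omega> \<in> sets \<Omega>" using Zvm T1 by (rule measurable_sets)
  then have "measure \<Omega> ((\<lambda>y. \<lambda>j\<in>I1. y (e j)) -` S \<inter> space \<Omega>) \<le> measure \<Omega> (Zv -` T \<inter> space \<Omega>)"
    using sub by (intro pO.finite_measure_mono)
  then show ?thesis using Pside Qside by simp
qed

end
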